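(* Let $d\ge2$ and let $Q$ be a qplex. A map $f:S\to Q$ is an isomorphism of quantum state space onto $Q$ if and only if there is a SIC $\{\Pi_j\}_{j=1}^{d^2}$ such that $(f(\rho))(j)=\frac1d\mathrm{Tr}(\rho\Pi_j)$ for all $j$ and all $\rho\in S$. In particular, a SIC exists in dimension $d$ if and only if a Hilbert qplex exists in $\mathbb{R}^{d^2}$.
   Context: Fix an integer $d\ge 2$. $\langle\cdot,\cdot\rangle$ is the standard inner product on $\mathbb{R}^{d^2}$, $\|\cdot\|$ the Euclidean norm. $\Delta=\{p\in\mathbb{R}^{d^2}: p(i)\ge0,\ \sum_ip(i)=1\}$; $H=\{u\in\mathbb{R}^{d^2}:\sum_i u(i)=1\}$; $c=(1/d^2,\dots,1/d^2)$. For $A\subseteq H$ the polar is $A^*=\{u\in H:\langle u,v\rangle\ge\frac{1}{d(d+1)}\ \forall v\in A\}$. Out-ball $B_{\rm o}=\{u\in H:\|u-c\|\le r_{\rm o}\}$, $r_{\rm o}^2=\frac{d-1}{d^2(d+1)}$. A qplex is a set $Q\subseteq\Delta\cap B_{\rm o}$ with $Q^*=Q$. Let $B_H$ be the real vector space of Hermitian operators on $\mathbb{C}^d$ and $S$ the set of density matrices (positive semidefinite, trace 1). An isomorphism of quantum state space onto a qplex $Q$ is (the restriction to $S$ of) an $\mathbb{R}$-linear bijection $f:B_H\to\mathbb{R}^{d^2}$ with $f(S)=Q$ and $\langle f(\rho),f(\rho')\rangle=\frac{\mathrm{Tr}(\rho\rho')+1}{d(d+1)}$ for all $\rho,\rho'\in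 S$; a qplex admitting such an $f$ is a Hilbert qplex. A SIC in dimension $d$ is a set of $d^2$ rank-one orthogonal projectors $\Pi_1,\dots,\Pi_{d^2}$ on $\mathbb{C}^d$ with $\mathrm{Tr}(\Pi_k\Pi_l)=\frac{d\delta_{kl}+1}{d+1}$. *)

theory Defs
  imports "HOL-Analysis.Analysis"
begin

(* Operators on C^d are complex^'n^'n with d = CARD('n).
   Vectors in R^(d^2) are real^'k with CARD('k) = d^2. *)

definition adj :: "complex^'n^'n \<Rightarrow> complex^'n^'n" where
  "adj A = (\<chi> i j. cnj (A $ j $ i))"

definition hermitian :: "complex^'n^'n \<Rightarrow> bool" where
  "hermitian A \<longleftrightarrow> adj A = A"

definition herm_ops :: "(complex^'n^'n) set" where
  "herm_ops = {A. hermitian A}"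

definition psd :: "complex^'n^'n \<Rightarrow> bool" where
  "psd A \<longleftrightarrow> hermitian A \<and>
     (\<forall>x::complex^'n. 0 \<le> Re (\<Sum>i\<in>UNIV. \<Sum>j\<in>UNIV. cnj (x $ i) * A $ i $ j * x $ j))"

definition density_matrices :: "(complex^'n^'n) set" where
  "density_matrices = {\<rho>. psd \<rho> \<and> trace \<rho> = 1}"

definition rank_one_projector :: "complex^'n^'n \<Rightarrow> bool" where
  "rank_one_projector P \<longleftrightarrow> hermitian P \<and> P ** P = P \<and> rank P = 1"

definition is_SIC :: "('k::finite \<Rightarrow> complex^'n^'n) \<Rightarrow> bool" where
  "is_SIC P \<longleftrightarrow> CARD('k) = CARD('n)^2 \<and> inj P \<and> (\<forall>k. rank_one_projector (P k)) \<and>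
     (\<forall>k l. trace (P k ** P l) =
        complex_of_real ((real CARD('n) * (if k = l then 1 else 0) + 1) / (real CARD('n) + 1)))"

definition prob_simplex :: "(real^'k) set" where
  "prob_simplex = {p. (\<forall>i. 0 \<le> p $ i) \<and> (\<Sum>i\<in>UNIV. p $ i) = 1}"

definition hyperplane_H :: "(real^'k) set" where
  "hyperplane_H = {u. (\<Sum>i\<in>UNIV. u $ i) = 1}"

definition centre :: "real^'k" where
  "centre = (\<chi> i. 1 / real CARD('k))"

definition polar :: "nat \<Rightarrow> (real^'k) set \<Rightarrow> (real^'k) set" where
  "polar d A = {u \<in> hyperplane_H. \<forall>v\<in>A. inner u v \<ge> 1 / (real d * (real d + 1))}"

definition out_ball :: "nat \<Rightarrow> (real^'k) set" where
  "out_ball d = {u \<in> hyperplane_H. (norm (u - centre))^2 \<le> (real d - 1) / ((real d)^2 * (real d + 1))}"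

definition qplex :: "nat \<Rightarrow> (real^'k) set \<Rightarrow> bool" where
  "qplex d Q \<longleftrightarrow> Q \<subseteq> prob_simplex \<inter> out_ball d \<and> polar d Q = Q"

definition qss_isomorphism ::
  "(complex^'n^'n \<Rightarrow> real^'k) \<Rightarrow> (real^'k) set \<Rightarrow> bool" where
  "qss_isomorphism f Q \<longleftrightarrow>
     (\<exists>F :: complex^'n^'n \<Rightarrow> real^'k.
        (\<forall>A\<in>herm_ops. \<forall>B\<in>herm_ops. \<forall>a b::real.
            F (a *\<^sub>R A + b *\<^sub>R B) = a *\<^sub>R F A + b *\<^sub>R F B) \<and>
        bij_betw F herm_ops (UNIV :: (real^'k) set) \<and>
        (\<forall>\<rho>\<in>density_matrices. F \<rho> = f \<rho>) \<and>
        F ` density_matrices = Q \<and>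
        (\<forall>\<rho>\<in>density_matrices. \<forall>\<rho>'\<in>density_matrices.
            inner (F \<rho>) (F \<rho>') =
              (Re (trace (\<rho> ** \<rho>')) + 1) / (real CARD('n) * (real CARD('n) + 1))))"

definition hilbert_qplex :: "('n::finite) itself \<Rightarrow> (real^'k) set \<Rightarrow> bool" where
  "hilbert_qplex _ Q \<longleftrightarrow> qplex CARD('n) Q \<and>
     (\<exists>f :: complex^'n^'n \<Rightarrow> real^'k. qss_isomorphism f Q)"

end

theory Submission
  imports Defs
begin



definition qf :: "complex^'n^'n \<Rightarrow> complex^'n \<Rightarrow> complex" where
  "qf A x = (\<Sum>i\<in>UNIV. \<Sum>j\<in>UNIV. cnj (x $ i) * A $ i $ j * x $ j)"

definition sesq :: "complex^'n^'n \<Rightarrow> complex^'n \<Rightarrow> complex^'n \<Rightarrow> complex" where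
  "sesq A y x = (\<Sum>i\<in>UNIV. \<Sum>j\<in>UNIV. cnj (y $ i) * A $ i $ j * x $ j)"

definition outer :: "complex^'n \<Rightarrow> complex^'n^'n" where
  "outer x = (\<chi> i j. x $ i * cnj (x $ j))"

definition tr2 :: "complex^'n^'n \<Rightarrow> complex^'n^'n \<Rightarrow> real" where
  "tr2 A B = Re (trace (A ** B))"

definition rtr :: "complex^'n^'n \<Rightarrow> real" where
  "rtr A = Re (trace A)"

lemma qf_sesq: "qf A x = sesq A x x" by (simp add: qf_def sesq_def)

lemma hermitian_iff: "hermitian A \<longleftrightarrow> (\<forall>i j. cnj (A $ i $ j) = A $ j $ i)"
proof
  assume h: "hermitian A"
  show "\<forall>i j. cnj (A $ i $ j) = A $ j $ i"
  proof (intro allI)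
    fix i j
    have "adj A $ j $ i = A $ j $ i" using h by (simp add: hermitian_def)
    thus "cnj (A $ i $ j) = A $ j $ i" by (simp add: adj_def)
  qed
next
  assume h: "\<forall>i j. cnj (A $ i $ j) = A $ j $ i"
  show "hermitian A" unfolding hermitian_def adj_def vec_eq_iff
    using h by simp
qed

lemma herm_cnj: "hermitian A \<Longrightarrow> cnj (A $ i $ j) = A $ j $ i"
  by (simp add: hermitian_iff)

lemma psd_iff: "psd A \<longleftrightarrow> hermitian A \<and> (\<forall>x. 0 \<le> Re (qf A x))"
  by (simp add: psd_def qf_def)

lemma tr2_sum: "tr2 A B = (\<Sum>i\<in>UNIV. \<Sum>k\<in>UNIV. Re (A $ i $ k * B $ k $ i))"
  by (simp add: tr2_def trace_def matrix_matrix_mult_def)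

lemma rtr_sum: "rtr A = (\<Sum>i\<in>UNIV. Re (A $ i $ i))"
  by (simp add: rtr_def trace_def)

lemma trace_outer_left: "trace (outer x ** A) = qf A x"
proof -
  have "trace (outer x ** A) = (\<Sum>i\<in>UNIV. \<Sum>k\<in>UNIV. x $ i * cnj (x $ k) * A $ k $ i)"
    by (simp add: trace_def matrix_matrix_mult_def outer_def)
  also have "\<dots> = (\<Sum>k\<in>UNIV. \<Sum>i\<in>UNIV. cnj (x $ k) * A $ k $ i * x $ i)"
    by (subst sum.swap) (simp add: mult_ac)
  finally show ?thesis by (simp add: qf_def)
qed

lemma trace_outer_right: "trace (A ** outer x) = qf A x"
  by (metis trace_mul_sym trace_outer_left)

lemma herm_add: "hermitian A \<Longrightarrow> hermitian B \<Longrightarrow> hermitian (A + B)"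
  by (simp add: hermitian_iff herm_cnj)
lemma herm_diff: "hermitian A \<Longrightarrow> hermitian B \<Longrightarrow> hermitian (A - B)"
  by (simp add: hermitian_iff herm_cnj)
lemma herm_scaleR: "hermitian A \<Longrightarrow> hermitian (c *\<^sub>R A)"
  by (simp add: hermitian_iff herm_cnj)
lemma herm_zero: "hermitian 0"
  by (simp add: hermitian_iff)
lemma herm_one: "hermitian (mat 1)"
  by (simp add: hermitian_iff mat_def)
lemma herm_outer: "hermitian (outer x)"
  by (simp add: hermitian_iff outer_def)

lemma subspace_herm: "subspace herm_ops"
  unfolding subspace_def herm_ops_def by (auto intro: herm_add herm_scaleR herm_zero)

lemma trace_herm_real:
  assumes "hermitian A" "hermitian B"
  shows "cnj (trace (A ** B)) = trace (A ** B)"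
proof -
  have "cnj (trace (A ** B)) = (\<Sum>i\<in>UNIV. \<Sum>k\<in>UNIV. cnj (A $ i $ k) * cnj (B $ k $ i))"
    by (simp add: trace_def matrix_matrix_mult_def)
  also have "\<dots> = (\<Sum>i\<in>UNIV. \<Sum>k\<in>UNIV. A $ k $ i * B $ i $ k)"
    using assms by (simp add: herm_cnj)
  also have "\<dots> = (\<Sum>k\<in>UNIV. \<Sum>i\<in>UNIV. A $ k $ i * B $ i $ k)"
    by (rule sum.swap)
  also have "\<dots> = trace (A ** B)"
    by (simp add: trace_def matrix_matrix_mult_def)
  finally show ?thesis .
qed

lemma trace_herm_eq: "trace (A ** B) = complex_of_real (tr2 A B)" if "hermitian A" "hermitian B"
proof -
  have "cnj z = z \<Longrightarrow> z = complex_of_real (Re z)" for z :: complex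
    by (simp add: complex_eq_iff)
  thus ?thesis unfolding tr2_def using trace_herm_real[of A B] that by blast
qed

lemma trace1_herm_eq: "trace A = complex_of_real (rtr A)" if "hermitian A"
proof -
  have "A $ i $ i = complex_of_real (Re (A $ i $ i))" for i
  proof -
    have "A $ i $ i = cnj (A $ i $ i)" using that by (simp add: herm_cnj)
    thus ?thesis by (simp add: complex_eq_iff)
  qed
  hence "trace A = (\<Sum>i\<in>UNIV. complex_of_real (Re (A $ i $ i)))"
    unfolding trace_def by (rule sum.cong[OF refl])
  thus ?thesis by (simp add: rtr_sum)
qed

lemma tr2_sym: "tr2 A B = tr2 B A"
  unfolding tr2_def using trace_mul_sym[of A B] by (rule arg_cong)

lemma tr2_add_left: "tr2 (A + B) C = tr2 A C + tr2 B C"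
  by (simp add: tr2_sum distrib_right sum.distrib)
lemma tr2_add_right: "tr2 C (A + B) = tr2 C A + tr2 C B"
  by (simp add: tr2_sum distrib_left sum.distrib)
lemma tr2_scale_left: "tr2 (c *\<^sub>R A) C = c * tr2 A C"
  by (simp add: tr2_sum sum_distrib_left)
lemma tr2_scale_right: "tr2 C (c *\<^sub>R A) = c * tr2 C A"
  by (simp add: tr2_sum sum_distrib_left)
lemma tr2_diff_left: "tr2 (A - B) C = tr2 A C - tr2 B C"
  by (simp add: tr2_sum left_diff_distrib sum_subtractf)
lemma tr2_diff_right: "tr2 C (A - B) = tr2 C A - tr2 C B"
  by (simp add: tr2_sum right_diff_distrib sum_subtractf)
lemma rtr_add: "rtr (A + B) = rtr A + rtr B"
  by (simp add: rtr_sum sum.distrib)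
lemma rtr_diff: "rtr (A - B) = rtr A - rtr B"
  by (simp add: rtr_sum sum_subtractf)
lemma rtr_scale: "rtr (c *\<^sub>R A) = c * rtr A"
  by (simp add: rtr_sum sum_distrib_left)

lemma linear_tr2_left: "linear (\<lambda>A. tr2 A B)"
  by (rule linearI) (simp_all add: tr2_add_left tr2_scale_left)
lemma linear_tr2_right: "linear (\<lambda>B. tr2 A B)"
  by (rule linearI) (simp_all add: tr2_add_right tr2_scale_right)
lemma linear_rtr: "linear rtr"
  by (rule linearI) (simp_all add: rtr_add rtr_scale)

lemma tr2_one_left: "tr2 (mat 1) A = rtr A"
  by (simp add: tr2_def rtr_def)
lemma tr2_one_right: "tr2 A (mat 1) = rtr A"
  by (simp add: tr2_def rtr_def)
lemma rtr_one: "rtr (mat 1 :: complex^'n^'n) = real CARD('n)"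
  unfolding rtr_def trace_I by simp

lemma tr2_self_herm:
  assumes "hermitian A" shows "tr2 A A = (\<Sum>i\<in>UNIV. \<Sum>k\<in>UNIV. (cmod (A $ i $ k))\<^sup>2)"
proof -
  have "Re (A $ i $ k * A $ k $ i) = (cmod (A $ i $ k))\<^sup>2" for i k
  proof -
    have "A $ k $ i = cnj (A $ i $ k)" using assms by (simp add: herm_cnj)
    thus ?thesis by (simp add: complex_mult_cnj cmod_power2)
  qed
  thus ?thesis by (simp add: tr2_sum)
qed



lemma sesq_add_right: "sesq A y (x + z) = sesq A y x + sesq A y z"
  by (simp add: sesq_def distrib_left sum.distrib)
lemma sesq_add_left: "sesq A (y + z) x = sesq A y x + sesq A z x"
  by (simp add: sesq_def distrib_right sum.distrib)
lemma sesq_scale_right: "sesq A y (t *s x) = t * sesq A y x"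
  by (simp add: sesq_def sum_distrib_left mult_ac)
lemma sesq_scale_left: "sesq A (t *s y) x = cnj t * sesq A y x"
  by (simp add: sesq_def sum_distrib_left mult_ac)
lemma sesq_herm: assumes "hermitian A" shows "sesq A x y = cnj (sesq A y x)"
proof -
  have "cnj (sesq A y x) = (\<Sum>i\<in>UNIV. \<Sum>j\<in>UNIV. y $ i * A $ j $ i * cnj (x $ j))"
    using assms by (simp add: sesq_def herm_cnj)
  also have "\<dots> = (\<Sum>j\<in>UNIV. \<Sum>i\<in>UNIV. y $ i * A $ j $ i * cnj (x $ j))"
    by (rule sum.swap)
  also have "\<dots> = sesq A x y"
    by (simp add: sesq_def mult_ac)
  finally show ?thesis by simp
qed

lemma qf_comb:
  assumes "hermitian A"
  shows "Re (qf A (x + t *s y)) = Re (qf A x) + (cmod t)\<^sup>2 * Re (qf A y) + 2 * Re (cnj t * sesq A y x)"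
proof -
  have "qf A (x + t *s y) = qf A x + t * sesq A x y + cnj t * sesq A y x + cnj t * t * qf A y"
    by (simp add: qf_sesq sesq_add_left sesq_add_right sesq_scale_left sesq_scale_right algebra_simps)
  also have "sesq A x y = cnj (sesq A y x)" using assms by (rule sesq_herm)
  finally have e: "qf A (x + t *s y) = qf A x + t * cnj (sesq A y x) + cnj t * sesq A y x + cnj t * t * qf A y" .
  have r1: "Re (t * cnj (sesq A y x)) = Re (cnj t * sesq A y x)"
    by simp
  have r2: "Re (cnj t * t * qf A y) = (cmod t)\<^sup>2 * Re (qf A y)"
    by (simp add: complex_mult_cnj[of t, simplified mult.commute] cmod_power2 mult.commute)
  show ?thesis unfolding e using r1 r2 by simp
qed

lemma psd_qf_nonneg: "psd A \<Longrightarrow> 0 \<le> Re (qf A x)"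
  by (simp add: psd_iff)
lemma psd_herm: "psd A \<Longrightarrow> hermitian A"
  by (simp add: psd_iff)

lemma psd_cs:
  assumes "psd A"
  shows "(cmod (sesq A y x))\<^sup>2 \<le> Re (qf A y) * Re (qf A x)"
proof -
  define s where "s = sesq A y x"
  define a where "a = Re (qf A y)"
  define b where "b = Re (qf A x)"
  define S where "S = (cmod s)\<^sup>2"
  have a0: "0 \<le> a" and b0: "0 \<le> b" using assms by (simp_all add: a_def b_def psd_qf_nonneg)
  have S0: "0 \<le> S" by (simp add: S_def)
  have key: "0 \<le> b + r\<^sup>2 * S * a - 2 * r * S" for r :: real
  proof -
    define t where "t = - (complex_of_real r * s)"
    have "0 \<le> Re (qf A (x + t *s y))" using assms by (rule psd_qf_nonneg)
    also have "\<dots> = b + (cmod t)\<^sup>2 * a + 2 * Re (cnj t * s)"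
      using qf_comb[OF psd_herm[OF assms]] by (simp add: a_def b_def s_def)
    also have "(cmod t)\<^sup>2 = r\<^sup>2 * S"
      by (simp add: t_def S_def norm_mult power_mult_distrib)
    also have "Re (cnj t * s) = - r * S"
    proof -
      have "cnj t * s = - (complex_of_real r * (cnj s * s))" by (simp add: t_def mult_ac)
      also have "cnj s * s = complex_of_real S"
        by (simp add: S_def complex_mult_cnj[of s, simplified mult.commute] cmod_power2 mult.commute)
      finally show ?thesis by simp
    qed
    finally show ?thesis by (simp add: mult_ac)
  qed
  show ?thesis
  proof (cases "S = 0")
    case True thus ?thesis using a0 b0 by (simp add: S_def a_def b_def s_def)
  next
    case False
    hence Sp: "0 < S" using S0 by simp
    show ?thesis
    proof (cases "a = 0")
      case True
      have "0 \<le> b + ((b+1)/(2*S))\<^sup>2 * S * a - 2 * ((b+1)/(2*S)) * S" by (rule key)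
      also have "\<dots> = -1" using True Sp by (simp add: field_simps)
      finally show ?thesis by simp
    next
      case False
      hence ap: "0 < a" using a0 by simp
      have "0 \<le> b + (1/a)\<^sup>2 * S * a - 2 * (1/a) * S" by (rule key)
      also have "\<dots> = b - S / a" using ap by (simp add: field_simps power2_eq_square)
      finally have "S / a \<le> b" by simp
      hence "S \<le> b * a" using ap by (simp add: field_simps)
      thus ?thesis by (simp add: S_def s_def a_def b_def mult.commute)
    qed
  qed
qed

lemma sesq_axis_left: "sesq A (axis i 1) x = (\<Sum>j\<in>UNIV. A $ i $ j * x $ j)"
proof -
  have "sesq A (axis i 1) x = (\<Sum>i'\<in>UNIV. (if i' = i then 1 else 0) * (\<Sum>j\<in>UNIV. A $ i' $ j * x $ j))"
    unfolding sesq_def by (rule sum.cong) (simp_all add: axis_def sum_distrib_left mult_ac)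
  also have "\<dots> = (\<Sum>j\<in>UNIV. A $ i $ j * x $ j)"
    by (simp add: if_distrib if_distribR sum.delta cong: if_cong)
  finally show ?thesis .
qed

lemma sesq_axis: "sesq A (axis i 1) (axis j 1) = A $ i $ j"
proof -
  have "(\<Sum>j'\<in>UNIV. A $ i $ j' * axis j 1 $ j') = (\<Sum>j'\<in>UNIV. if j' = j then A $ i $ j' else 0)"
    by (rule sum.cong) (simp_all add: axis_def)
  thus ?thesis by (simp add: sesq_axis_left sum.delta')
qed

lemma qf_axis: "qf A (axis i 1) = A $ i $ i"
  by (simp add: qf_sesq sesq_axis)

lemma herm_diag: "hermitian A \<Longrightarrow> A $ i $ i = complex_of_real (Re (A $ i $ i))"
  using herm_cnj[of A i i] by (simp add: complex_eq_iff)

lemma psd_diag: "psd A \<Longrightarrow> 0 \<le> Re (A $ i $ i)"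
  using psd_qf_nonneg[of A "axis i 1"] by (simp add: qf_axis)

lemma psd_offdiag: "psd A \<Longrightarrow> (cmod (A $ i $ j))\<^sup>2 \<le> Re (A $ i $ i) * Re (A $ j $ j)"
  using psd_cs[of A "axis i 1" "axis j 1"] by (simp add: qf_axis sesq_axis)

lemma psd_zero_diag: "psd A \<Longrightarrow> Re (A $ i $ i) = 0 \<Longrightarrow> A $ i $ j = 0"
  using psd_offdiag[of A i j] by simp

lemma psd_trace0: assumes "psd A" "rtr A = 0" shows "A = 0"
proof -
  have "\<forall>i\<in>UNIV. Re (A $ i $ i) = 0"
    using assms by (subst sum_nonneg_eq_0_iff[symmetric]) (simp_all add: rtr_sum psd_diag)
  thus ?thesis using psd_zero_diag[OF assms(1)] by (simp add: vec_eq_iff)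
qed

lemma psd_tr_sq: assumes "psd A" shows "tr2 A A \<le> (rtr A)\<^sup>2"
proof -
  have "tr2 A A = (\<Sum>i\<in>UNIV. \<Sum>k\<in>UNIV. (cmod (A $ i $ k))\<^sup>2)"
    using psd_herm[OF assms] by (rule tr2_self_herm)
  also have "\<dots> \<le> (\<Sum>i\<in>UNIV. \<Sum>k\<in>UNIV. Re (A $ i $ i) * Re (A $ k $ k))"
    by (intro sum_mono psd_offdiag[OF assms])
  also have "\<dots> = (rtr A)\<^sup>2"
    by (simp add: rtr_sum power2_eq_square sum_product)
  finally show ?thesis .
qed



lemma scaleR_cpx: "c *\<^sub>R (z::complex) = complex_of_real c * z"
  by (simp add: scaleR_conv_of_real)

lemma qf_diff_mat: "qf (A - B) x = qf A x - qf B x"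
  by (simp add: qf_def right_diff_distrib left_diff_distrib sum_subtractf)
lemma qf_scaleR_mat: "qf (c *\<^sub>R A) x = complex_of_real c * qf A x"
  by (simp add: qf_def sum_distrib_left scaleR_cpx mult_ac)

lemma cnj_mult_self: "cnj z * z = complex_of_real ((cmod z)\<^sup>2)"
  by (simp add: complex_mult_cnj[of z, simplified mult.commute] cmod_power2 mult.commute)
lemma mult_cnj_self: "z * cnj z = complex_of_real ((cmod z)\<^sup>2)"
  by (simp add: complex_mult_cnj cmod_power2)

lemma qf_outer: "qf (outer v) x = complex_of_real ((cmod (\<Sum>j\<in>UNIV. cnj (v $ j) * x $ j))\<^sup>2)"
proof -
  have "qf (outer v) x = (\<Sum>i\<in>UNIV. cnj (x $ i) * v $ i) * (\<Sum>j\<in>UNIV. cnj (v $ j) * x $ j)"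
    by (simp add: qf_def outer_def sum_product mult_ac)
  also have "(\<Sum>i\<in>UNIV. cnj (x $ i) * v $ i) = cnj (\<Sum>j\<in>UNIV. cnj (v $ j) * x $ j)"
    by (simp add: mult.commute)
  finally show ?thesis by (simp only: cnj_mult_self)
qed

lemma outer_entry: "outer v $ i $ j = v $ i * cnj (v $ j)"
  by (simp add: outer_def)

lemma outer_scale: "outer (complex_of_real r *s v) = r\<^sup>2 *\<^sub>R outer v"
  by (simp add: outer_def vec_eq_iff scaleR_cpx power2_eq_square mult_ac)

lemma rtr_outer: "rtr (outer v) = (\<Sum>k\<in>UNIV. (cmod (v $ k))\<^sup>2)"
  by (simp add: rtr_sum outer_entry mult_cnj_self)

lemma psd_schur:
  assumes A: "psd A" and ap: "0 < Re (A $ i $ i)"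
  shows "psd (A - (1 / Re (A $ i $ i)) *\<^sub>R outer (column i A))"
proof -
  define a where "a = Re (A $ i $ i)"
  have h: "hermitian A" using A by (rule psd_herm)
  have herm: "hermitian (A - (1 / a) *\<^sub>R outer (column i A))"
    by (intro herm_diff h herm_scaleR herm_outer)
  have "0 \<le> Re (qf (A - (1 / a) *\<^sub>R outer (column i A)) x)" for x
  proof -
    define s where "s = sesq A (axis i 1) x"
    have "(\<Sum>j\<in>UNIV. cnj (column i A $ j) * x $ j) = s"
      unfolding s_def sesq_axis_left by (simp add: column_def herm_cnj[OF h])
    hence q: "Re (qf (A - (1 / a) *\<^sub>R outer (column i A)) x) = Re (qf A x) - (1/a) * (cmod s)\<^sup>2"
      by (simp add: qf_diff_mat qf_scaleR_mat qf_outer)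
    have "(cmod s)\<^sup>2 \<le> a * Re (qf A x)"
      using psd_cs[OF A, of "axis i 1" x] by (simp add: s_def a_def qf_axis)
    hence "(1/a) * (cmod s)\<^sup>2 \<le> Re (qf A x)"
      using ap by (simp add: a_def field_simps)
    thus ?thesis using q by simp
  qed
  thus ?thesis using herm by (simp add: psd_iff a_def)
qed

definition msupp :: "complex^'n^'n \<Rightarrow> 'n set" where
  "msupp A = {i. \<exists>j. A $ i $ j \<noteq> 0}"

lemma schur_entry:
  assumes h: "hermitian A"
  shows "(A - (1 / a) *\<^sub>R outer (column i A)) $ k $ l = A $ k $ l - complex_of_real (1/a) * (A $ k $ i * A $ i $ l)"
  by (simp add: outer_entry column_def herm_cnj[OF h] scaleR_cpx)

lemma psd_decomp: "psd A \<Longrightarrow> \<exists>vs. A = sum_list (map outer vs)"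
proof (induction "card (msupp A)" arbitrary: A rule: less_induct)
  case less
  show ?case
  proof (cases "msupp A = {}")
    case True
    hence "A = 0" by (auto simp: msupp_def vec_eq_iff)
    hence "A = sum_list (map outer [])" by simp
    thus ?thesis by blast
  next
    case False
    then obtain i j where ij: "A $ i $ j \<noteq> 0" by (auto simp: msupp_def)
    define a where "a = Re (A $ i $ i)"
    have h: "hermitian A" using less.prems by (rule psd_herm)
    have "a \<noteq> 0" using psd_zero_diag[OF less.prems, of i j] ij by (auto simp: a_def)
    hence ap: "0 < a" using psd_diag[OF less.prems, of i] by (simp add: a_def)
    have aii: "A $ i $ i = complex_of_real a" using herm_diag[OF h] by (simp add: a_def)
    define A' where "A' = A - (1 / a) *\<^sub>R outer (column i A)"
    have psdA': "psd A'" unfolding A'_def a_def using psd_schur[OF less.prems] ap by (simp add: a_def)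
    have ent: "A' $ k $ l = A $ k $ l - complex_of_real (1/a) * (A $ k $ i * A $ i $ l)" for k l
      unfolding A'_def by (rule schur_entry[OF h])
    have sub: "msupp A' \<subseteq> msupp A - {i}"
    proof
      fix k assume k: "k \<in> msupp A'"
      then obtain l where l: "A' $ k $ l \<noteq> 0" by (auto simp: msupp_def)
      have "k \<noteq> i"
      proof
        assume "k = i"
        hence "A' $ k $ l = A $ i $ l - complex_of_real (1/a) * (complex_of_real a * A $ i $ l)"
          using ent aii by simp
        also have "\<dots> = 0" using ap by (simp add: of_real_def)
        finally show False using l by simp
      qed
      moreover have "k \<in> msupp A"
      proof (rule ccontr)
        assume "k \<notin> msupp A"
        hence "A $ k $ m = 0" for m by (auto simp: msupp_def)
        hence "A' $ k $ l = 0" using ent by simp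
        thus False using l by simp
      qed
      ultimately show "k \<in> msupp A - {i}" by simp
    qed
    have "i \<in> msupp A" using ij by (auto simp: msupp_def)
    hence "msupp A' \<subset> msupp A" using sub by blast
    hence "card (msupp A') < card (msupp A)" by (rule psubset_card_mono[OF finite])
    then obtain vs where vs: "A' = sum_list (map outer vs)" using less.hyps psdA' by blast
    define w where "w = complex_of_real (1 / sqrt a) *s column i A"
    have "outer w = (1 / a) *\<^sub>R outer (column i A)"
      unfolding w_def outer_scale using ap by (simp add: power_divide)
    hence "A = sum_list (map outer (w # vs))" using vs unfolding A'_def
      by (simp add: algebra_simps)
    thus ?thesis by blast
  qed
qed

lemma tr2_zero_left: "tr2 0 B = 0"
  by (simp add: tr2_sum)

lemma psd_tr2_nonneg: assumes "psd A" "psd B" shows "0 \<le> tr2 A B"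
proof -
  obtain vs where vs: "A = sum_list (map outer vs)" using psd_decomp[OF assms(1)] by blast
  have "0 \<le> tr2 (sum_list (map outer vs)) B"
  proof (induction vs)
    case Nil thus ?case by (simp add: tr2_zero_left)
  next
    case (Cons v vs)
    have "tr2 (outer v) B = Re (qf B v)" by (simp add: tr2_def trace_outer_left)
    hence "0 \<le> tr2 (outer v) B" using psd_qf_nonneg[OF assms(2)] by simp
    thus ?case using Cons by (simp add: tr2_add_left)
  qed
  thus ?thesis using vs by simp
qed



lemma psd_pure:
  assumes A: "psd A" and t1: "rtr A = 1" and t2: "tr2 A A = 1"
  shows "\<exists>w. A = outer w \<and> (\<Sum>i\<in>UNIV. (cmod (w $ i))\<^sup>2) = 1"
proof -
  have h: "hermitian A" using A by (rule psd_herm)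
  define D where "D i k = Re (A $ i $ i) * Re (A $ k $ k) - (cmod (A $ i $ k))\<^sup>2" for i k
  have D0: "0 \<le> D i k" for i k using psd_offdiag[OF A, of i k] by (simp add: D_def)
  have "(\<Sum>i\<in>UNIV. \<Sum>k\<in>UNIV. D i k) = (rtr A)\<^sup>2 - tr2 A A"
    by (simp add: D_def sum_subtractf tr2_self_herm[OF h] rtr_sum power2_eq_square sum_product)
  hence "(\<Sum>i\<in>UNIV. \<Sum>k\<in>UNIV. D i k) = 0" using t1 t2 by simp
  hence "\<forall>i\<in>UNIV. (\<Sum>k\<in>UNIV. D i k) = 0"
    by (subst sum_nonneg_eq_0_iff[symmetric]) (simp_all add: D0 sum_nonneg)
  hence Dz: "D i k = 0" for i k
    using sum_nonneg_eq_0_iff[of UNIV "D i", OF finite] D0 by auto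
  have "\<exists>i0. 0 < Re (A $ i0 $ i0)"
  proof (rule ccontr)
    assume "\<not> ?thesis"
    hence "Re (A $ i $ i) = 0" for i using psd_diag[OF A, of i] by (meson linorder_not_less order_antisym)
    hence "rtr A = 0" by (simp add: rtr_sum)
    thus False using t1 by simp
  qed
  then obtain i0 where ap: "0 < Re (A $ i0 $ i0)" by blast
  define a where "a = Re (A $ i0 $ i0)"
  define c where "c = column i0 A"
  define A' where "A' = A - (1 / a) *\<^sub>R outer c"
  have psdA': "psd A'" unfolding A'_def a_def c_def by (rule psd_schur[OF A ap])
  have cn: "(\<Sum>k\<in>UNIV. (cmod (c $ k))\<^sup>2) = a"
  proof -
    have "(cmod (c $ k))\<^sup>2 = Re (A $ k $ k) * a" for k
      using Dz[of k i0] by (simp add: D_def c_def column_def a_def)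
    hence "(\<Sum>k\<in>UNIV. (cmod (c $ k))\<^sup>2) = (\<Sum>k\<in>UNIV. Re (A $ k $ k)) * a"
      by (simp add: sum_distrib_right)
    thus ?thesis using t1 by (simp add: rtr_sum)
  qed
  have "rtr A' = 0"
    using ap cn t1 by (simp add: A'_def rtr_diff rtr_scale rtr_outer a_def)
  hence "A' = 0" by (rule psd_trace0[OF psdA'])
  hence eq: "A = (1 / a) *\<^sub>R outer c" by (simp add: A'_def)
  define w where "w = complex_of_real (1 / sqrt a) *s c"
  have "outer w = (1 / a) *\<^sub>R outer c"
    unfolding w_def outer_scale using ap by (simp add: power_divide a_def)
  moreover have "(\<Sum>i\<in>UNIV. (cmod (w $ i))\<^sup>2) = 1"
  proof -
    have "(\<Sum>i\<in>UNIV. (cmod (w $ i))\<^sup>2) = (\<Sum>i\<in>UNIV. (1/a) * (cmod (c $ i))\<^sup>2)"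
    proof (rule sum.cong[OF refl])
      fix i
      have "cmod (w $ i) = (1 / sqrt a) * cmod (c $ i)"
        using ap by (simp add: w_def norm_mult a_def norm_divide)
      hence "(cmod (w $ i))\<^sup>2 = (1 / sqrt a)\<^sup>2 * (cmod (c $ i))\<^sup>2"
        by (simp add: power_mult_distrib power_divide)
      also have "(1 / sqrt a)\<^sup>2 = 1 / a" using ap by (simp add: power_divide a_def)
      finally show "(cmod (w $ i))\<^sup>2 = (1/a) * (cmod (c $ i))\<^sup>2" .
    qed
    also have "\<dots> = (1/a) * a" using cn by (simp only: sum_distrib_left[symmetric])
    also have "\<dots> = 1" using ap by (simp add: a_def)
    finally show ?thesis .
  qed
  ultimately show ?thesis using eq by metis
qed

lemma rank_one_outer:
  assumes n1: "(\<Sum>i\<in>UNIV. (cmod (w $ i))\<^sup>2) = 1"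
  shows "rank_one_projector (outer w)"
proof -
  have idem: "outer w ** outer w = outer w"
  proof -
    have "(outer w ** outer w) $ i $ j = outer w $ i $ j" for i j
    proof -
      have "(outer w ** outer w) $ i $ j = (\<Sum>k\<in>UNIV. w $ i * cnj (w $ j) * (cnj (w $ k) * w $ k))"
        by (simp add: matrix_matrix_mult_def outer_entry mult_ac)
      also have "\<dots> = w $ i * cnj (w $ j) * complex_of_real (\<Sum>k\<in>UNIV. (cmod (w $ k))\<^sup>2)"
        by (simp add: cnj_mult_self sum_distrib_left)
      finally show ?thesis using n1 by (simp add: outer_entry)
    qed
    thus ?thesis by (simp add: vec_eq_iff)
  qed
  define u where "u = (\<chi> j. cnj (w $ j))"
  obtain i0 where wi0: "w $ i0 \<noteq> 0"
  proof (rule ccontr)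
    assume "\<not> thesis"
    hence "w $ i = 0" for i using that by blast
    thus False using n1 by simp
  qed
  have rows_sub: "rows (outer w) \<subseteq> vec.span {u}"
  proof
    fix r assume "r \<in> rows (outer w)"
    then obtain i where r: "r = row i (outer w)" by (auto simp: rows_def)
    have "r = w $ i *s u" by (simp add: r row_def u_def outer_entry vec_eq_iff)
    thus "r \<in> vec.span {u}" by (simp add: vec.span_base vec.span_scale)
  qed
  have u_in: "u = (1 / w $ i0) *s row i0 (outer w)"
    using wi0 by (simp add: row_def u_def outer_entry vec_eq_iff)
  have "row i0 (outer w) \<in> rows (outer w)" by (auto simp: rows_def)
  hence "u \<in> vec.span (rows (outer w))" unfolding u_in by (intro vec.span_scale vec.span_base)
  hence "vec.span (rows (outer w)) = vec.span {u}"
    using rows_sub by (subst vec.span_eq) (simp add: vec.span_base)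
  hence "rank (outer w) = vec.dim {u}"
    by (metis row_rank_def_gen vec.dim_span)
  also have "u \<noteq> 0" using wi0 by (simp add: u_def vec_eq_iff) (metis complex_cnj_zero_iff)
  hence "vec.dim {u} = 1" by (simp add: vec.dim_eq_card_independent vec.dependent_single)
  finally show ?thesis using idem herm_outer by (simp add: rank_one_projector_def)
qed



definition iM :: "complex^'n^'n \<Rightarrow> complex^'n^'n" where
  "iM A = (\<chi> i j. \<i> * A $ i $ j)"

lemma linear_iM: "linear iM"
  by (rule linearI) (simp_all add: iM_def vec_eq_iff distrib_left scaleR_cpx mult_ac)

lemma inj_iM: "inj iM"
  by (rule injI) (simp add: iM_def vec_eq_iff)

lemma herm_ops_iff: "A \<in> herm_ops \<longleftrightarrow> hermitian A"
  by (simp add: herm_ops_def)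

lemma dim_herm: "dim (herm_ops :: (complex^'n^'n) set) = CARD('n)^2"
proof -
  let ?H = "herm_ops :: (complex^'n^'n) set"
  let ?W = "iM ` ?H"
  have sH: "subspace ?H" by (rule subspace_herm)
  have sW: "subspace ?W" by (rule linear_subspace_image[OF linear_iM sH])
  have dW: "dim ?W = dim ?H"
    by (rule dim_image_eq[OF linear_iM]) (meson inj_iM inj_on_subset subset_UNIV)
  have int: "?H \<inter> ?W \<subseteq> {0}"
  proof
    fix B assume "B \<in> ?H \<inter> ?W"
    then obtain A where hB: "hermitian B" and hA: "hermitian A" and B: "B = iM A"
      by (auto simp: herm_ops_iff)
    have "B $ i $ j = 0" for i j
    proof -
      have "cnj (B $ j $ i) = B $ i $ j" by (rule herm_cnj[OF hB])
      also have "cnj (B $ j $ i) = - (\<i> * A $ i $ j)"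
        by (simp add: B iM_def herm_cnj[OF hA])
      also have "\<i> * A $ i $ j = B $ i $ j" by (simp add: B iM_def)
      finally show ?thesis by simp
    qed
    thus "B \<in> {0}" by (simp add: vec_eq_iff)
  qed
  have dint: "dim (?H \<inter> ?W) = 0" using int by (simp add: dim_eq_0)
  have sum: "{x + y |x y. x \<in> ?H \<and> y \<in> ?W} = UNIV"
  proof (rule set_eqI, rule iffI)
    fix M :: "complex^'n^'n"
    define H where "H = (\<chi> i j. (M $ i $ j + cnj (M $ j $ i)) / 2)"
    define K where "K = (\<chi> i j. (M $ i $ j - cnj (M $ j $ i)) / (2 * \<i>))"
    have hH: "hermitian H" by (simp add: H_def hermitian_iff add.commute)
    have hK: "hermitian K" by (simp add: K_def hermitian_iff field_simps)
    have "M = H + iM K" by (simp add: H_def K_def iM_def vec_eq_iff field_simps)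
    moreover have "iM K \<in> ?W" using hK by (simp add: herm_ops_iff)
    ultimately show "M \<in> {x + y |x y. x \<in> ?H \<and> y \<in> ?W}" using hH by (auto simp: herm_ops_iff)
  qed simp
  have "dim (UNIV :: (complex^'n^'n) set) = 2 * CARD('n)^2"
    by (simp add: dim_UNIV power2_eq_square)
  moreover have "dim {x + y |x y. x \<in> ?H \<and> y \<in> ?W} + dim (?H \<inter> ?W) = dim ?H + dim ?W"
    by (rule dim_sums_Int[OF sH sW])
  ultimately show ?thesis using dW dint sum by simp
qed

lemma dens_iff: "\<rho> \<in> density_matrices \<longleftrightarrow> psd \<rho> \<and> rtr \<rho> = 1"
proof -
  have "psd \<rho> \<Longrightarrow> trace \<rho> = 1 \<longleftrightarrow> rtr \<rho> = 1"
    using trace1_herm_eq[OF psd_herm] by (metis of_real_1 of_real_eq_iff)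
  thus ?thesis by (auto simp: density_matrices_def)
qed

lemma dens_herm: "\<rho> \<in> density_matrices \<Longrightarrow> hermitian \<rho>"
  by (simp add: dens_iff psd_herm)

lemma qf_add_mat: "qf (A + B) x = qf A x + qf B x"
  by (simp add: qf_def distrib_left distrib_right sum.distrib)

lemma qf_one: "qf (mat 1) x = complex_of_real (\<Sum>i\<in>UNIV. (cmod (x $ i))\<^sup>2)"
proof -
  have "qf (mat 1) x = (\<Sum>i\<in>UNIV. cnj (x $ i) * x $ i)"
    unfolding qf_def by (rule sum.cong) (simp_all add: mat_def if_distrib if_distribR sum.delta cong: if_cong)
  thus ?thesis by (simp add: cnj_mult_self)
qed

lemma psd_scaleR: "psd A \<Longrightarrow> 0 \<le> c \<Longrightarrow> psd (c *\<^sub>R A)"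
  by (simp add: psd_iff herm_scaleR qf_scaleR_mat psd_qf_nonneg)

lemma psd_outer: "psd (outer v)"
  by (simp add: psd_iff herm_outer qf_outer)

lemma qf_lower:
  "- (\<Sum>i\<in>UNIV. \<Sum>j\<in>UNIV. cmod (A $ i $ j)) * (\<Sum>k\<in>UNIV. (cmod (x $ k))\<^sup>2) \<le> Re (qf A x)"
proof -
  define N where "N = (\<Sum>k\<in>UNIV. (cmod (x $ k))\<^sup>2)"
  have xi: "(cmod (x $ i))\<^sup>2 \<le> N" for i
    unfolding N_def by (rule member_le_sum) simp_all
  have bnd: "cmod (x $ i) * cmod (x $ j) \<le> N" for i j
  proof -
    have "cmod (x $ i) * cmod (x $ j) \<le> ((cmod (x $ i))\<^sup>2 + (cmod (x $ j))\<^sup>2) / 2"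
      using sum_squares_bound[of "cmod (x $ i)" "cmod (x $ j)"] by (simp add: power2_eq_square)
    also have "\<dots> \<le> N" using xi[of i] xi[of j] by simp
    finally show ?thesis .
  qed
  have "cmod (qf A x) \<le> (\<Sum>i\<in>UNIV. \<Sum>j\<in>UNIV. cmod (cnj (x $ i) * A $ i $ j * x $ j))"
    unfolding qf_def by (rule order_trans[OF norm_sum sum_mono]) (rule norm_sum)
  also have "\<dots> \<le> (\<Sum>i\<in>UNIV. \<Sum>j\<in>UNIV. cmod (A $ i $ j) * N)"
  proof (intro sum_mono)
    fix i j
    have "cmod (cnj (x $ i) * A $ i $ j * x $ j) = cmod (A $ i $ j) * (cmod (x $ i) * cmod (x $ j))"
      by (simp add: norm_mult)
    also have "\<dots> \<le> cmod (A $ i $ j) * N" by (rule mult_left_mono[OF bnd]) simp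
    finally show "cmod (cnj (x $ i) * A $ i $ j * x $ j) \<le> cmod (A $ i $ j) * N" .
  qed
  also have "\<dots> = (\<Sum>i\<in>UNIV. \<Sum>j\<in>UNIV. cmod (A $ i $ j)) * N"
    by (simp add: sum_distrib_right)
  finally have "cmod (qf A x) \<le> (\<Sum>i\<in>UNIV. \<Sum>j\<in>UNIV. cmod (A $ i $ j)) * N" .
  moreover have "- cmod (qf A x) \<le> Re (qf A x)" using abs_Re_le_cmod[of "qf A x"] by linarith
  ultimately show ?thesis unfolding N_def by linarith
qed

lemma herm_states:
  assumes h: "hermitian (A :: complex^'n^'n)"
  shows "\<exists>a b \<rho>1 \<rho>2. \<rho>1 \<in> density_matrices \<and> \<rho>2 \<in> density_matrices \<and> A = a *\<^sub>R \<rho>1 + b *\<^sub>R \<rho>2"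
proof -
  define T where "T = 1 + (\<Sum>i\<in>UNIV. \<Sum>j\<in>UNIV. cmod (A $ i $ j))"
  define B where "B = A + T *\<^sub>R mat 1"
  have hB: "hermitian B" unfolding B_def by (intro herm_add h herm_scaleR herm_one)
  have qB: "(\<Sum>k\<in>UNIV. (cmod (x $ k))\<^sup>2) \<le> Re (qf B x)" for x
  proof -
    have "Re (qf B x) = Re (qf A x) + T * (\<Sum>k\<in>UNIV. (cmod (x $ k))\<^sup>2)"
      by (simp add: B_def qf_add_mat qf_scaleR_mat qf_one)
    thus ?thesis using qf_lower[of A x] by (simp add: T_def algebra_simps)
  qed
  have pB: "psd B" using hB qB by (simp add: psd_iff) (meson order_trans sum_nonneg zero_le_power2)
  have rB: "rtr B = (\<Sum>i\<in>UNIV. Re (qf B (axis i 1)))" by (simp add: rtr_sum qf_axis)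
  have ge: "(\<Sum>i\<in>(UNIV::'n set). (1::real)) \<le> (\<Sum>i\<in>UNIV. Re (qf B (axis i 1)))"
  proof (rule sum_mono)
    fix i :: 'n
    have "(\<Sum>k\<in>UNIV. (cmod (axis i (1::complex) $ k))\<^sup>2) = 1"
      by (simp add: axis_def if_distrib if_distribR sum.delta cong: if_cong)
    thus "1 \<le> Re (qf B (axis i 1))" using qB[of "axis i 1"] by simp
  qed
  have c0: "0 < real CARD('n)" by simp
  have ge': "real CARD('n) \<le> (\<Sum>i\<in>UNIV. Re (qf B (axis i 1)))" using ge by simp
  have rpos: "0 < rtr B" unfolding rB using c0 ge' by (rule order_less_le_trans)
  define r where "r = rtr B"
  define \<rho>1 where "\<rho>1 = (1 / r) *\<^sub>R B"
  define \<rho>2 where "\<rho>2 = (1 / real CARD('n)) *\<^sub>R (mat 1 :: complex^'n^'n)"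
  have s1: "\<rho>1 \<in> density_matrices"
    using rpos pB by (simp add: dens_iff \<rho>1_def r_def psd_scaleR rtr_scale)
  have p1: "psd (mat 1 :: complex^'n^'n)" by (simp add: psd_iff herm_one qf_one sum_nonneg)
  have s2: "\<rho>2 \<in> density_matrices"
    using p1 by (simp add: dens_iff \<rho>2_def psd_scaleR rtr_scale rtr_one)
  have "A = r *\<^sub>R \<rho>1 + (- T * real CARD('n)) *\<^sub>R \<rho>2"
    using rpos by (simp add: \<rho>1_def \<rho>2_def r_def B_def)
  thus ?thesis using s1 s2 by blast
qed

lemma outer_state: assumes "x \<noteq> 0"
  shows "(1 / (\<Sum>k\<in>UNIV. (cmod (x $ k))\<^sup>2)) *\<^sub>R outer x \<in> density_matrices"
proof -
  have "(\<Sum>k\<in>UNIV. (cmod (x $ k))\<^sup>2) \<noteq> 0"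
    using assms by (subst sum_nonneg_eq_0_iff) (auto simp: vec_eq_iff)
  moreover have "0 \<le> (\<Sum>k\<in>UNIV. (cmod (x $ k))\<^sup>2)" by (simp add: sum_nonneg)
  ultimately show ?thesis
    by (simp add: dens_iff psd_scaleR psd_outer rtr_scale rtr_outer)
qed



lemma herm_lin_cases:
  fixes F :: "complex^'n^'n \<Rightarrow> 'b::real_vector"
  assumes lin: "\<forall>A\<in>herm_ops. \<forall>B\<in>herm_ops. \<forall>a b::real. F (a *\<^sub>R A + b *\<^sub>R B) = a *\<^sub>R F A + b *\<^sub>R F B"
  shows "hermitian A \<Longrightarrow> hermitian B \<Longrightarrow> F (A + B) = F A + F B"
    and "hermitian A \<Longrightarrow> F (c *\<^sub>R A) = c *\<^sub>R F A"
proof -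
  assume "hermitian A" "hermitian B"
  hence "F (1 *\<^sub>R A + 1 *\<^sub>R B) = 1 *\<^sub>R F A + 1 *\<^sub>R F B" using lin unfolding herm_ops_def by blast
  thus "F (A + B) = F A + F B" by simp
next
  assume h: "hermitian A"
  have "F (c *\<^sub>R A + 0 *\<^sub>R A) = c *\<^sub>R F A + 0 *\<^sub>R F A" using lin h unfolding herm_ops_def by blast
  thus "F (c *\<^sub>R A) = c *\<^sub>R F A" by simp
qed

lemma iso_ext:
  fixes F :: "complex^'n^'n \<Rightarrow> real^'k"
  assumes lin: "\<forall>A\<in>herm_ops. \<forall>B\<in>herm_ops. \<forall>a b::real. F (a *\<^sub>R A + b *\<^sub>R B) = a *\<^sub>R F A + b *\<^sub>R F B"
    and ip: "\<forall>\<rho>\<in>density_matrices. \<forall>\<rho>'\<in>density_matrices.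
            inner (F \<rho>) (F \<rho>') = (Re (trace (\<rho> ** \<rho>')) + 1) / (real CARD('n) * (real CARD('n) + 1))"
    and sm: "\<forall>\<rho>\<in>density_matrices. (\<Sum>j\<in>UNIV. F \<rho> $ j) = 1"
    and hA: "hermitian A" and hB: "hermitian B"
  shows "inner (F A) (F B) = (tr2 A B + rtr A * rtr B) / (real CARD('n) * (real CARD('n) + 1))"
    and "(\<Sum>j\<in>UNIV. F A $ j) = rtr A"
proof -
  define C where "C = real CARD('n) * (real CARD('n) + 1)"
  have cpos: "C \<noteq> 0" by (simp add: C_def)
  have ip': "inner (F \<rho>) (F \<rho>') = (tr2 \<rho> \<rho>' + 1) / C" if "\<rho> \<in> density_matrices" "\<rho>' \<in> density_matrices" for \<rho> \<rho>'
    using ip that by (simp add: tr2_def C_def)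
  have tr1: "rtr \<rho> = 1" if "\<rho> \<in> density_matrices" for \<rho> using that by (simp add: dens_iff)
  obtain a b \<rho>1 \<rho>2 where s1: "\<rho>1 \<in> density_matrices" and s2: "\<rho>2 \<in> density_matrices"
    and A: "A = a *\<^sub>R \<rho>1 + b *\<^sub>R \<rho>2" using herm_states[OF hA] by blast
  obtain c e \<sigma>1 \<sigma>2 where t1: "\<sigma>1 \<in> density_matrices" and t2: "\<sigma>2 \<in> density_matrices"
    and B: "B = c *\<^sub>R \<sigma>1 + e *\<^sub>R \<sigma>2" using herm_states[OF hB] by blast
  have FA: "F A = a *\<^sub>R F \<rho>1 + b *\<^sub>R F \<rho>2"
    using lin dens_herm[OF s1] dens_herm[OF s2] unfolding A herm_ops_def by blast
  have FB: "F B = c *\<^sub>R F \<sigma>1 + e *\<^sub>R F \<sigma>2"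
    using lin dens_herm[OF t1] dens_herm[OF t2] unfolding B herm_ops_def by blast
  have "inner (F A) (F B) = a * c * inner (F \<rho>1) (F \<sigma>1) + a * e * inner (F \<rho>1) (F \<sigma>2)
      + b * c * inner (F \<rho>2) (F \<sigma>1) + b * e * inner (F \<rho>2) (F \<sigma>2)"
    by (simp add: FA FB inner_add_left inner_add_right algebra_simps)
  also have "\<dots> = (a * c * (tr2 \<rho>1 \<sigma>1 + 1) + a * e * (tr2 \<rho>1 \<sigma>2 + 1)
      + b * c * (tr2 \<rho>2 \<sigma>1 + 1) + b * e * (tr2 \<rho>2 \<sigma>2 + 1)) / C"
    using s1 s2 t1 t2 cpos by (simp add: ip' field_simps)
  also have "\<dots> = (tr2 A B + rtr A * rtr B) / C"
    using s1 s2 t1 t2 by (simp add: A B tr2_add_left tr2_add_right tr2_scale_left tr2_scale_right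
        rtr_add rtr_scale tr1 algebra_simps)
  finally show "inner (F A) (F B) = (tr2 A B + rtr A * rtr B) / (real CARD('n) * (real CARD('n) + 1))"
    by (simp add: C_def)
  have "(\<Sum>j\<in>UNIV. F A $ j) = a * (\<Sum>j\<in>UNIV. F \<rho>1 $ j) + b * (\<Sum>j\<in>UNIV. F \<rho>2 $ j)"
    by (simp add: FA sum.distrib sum_distrib_left)
  also have "\<dots> = rtr A" using sm s1 s2 by (simp add: A rtr_add rtr_scale tr1)
  finally show "(\<Sum>j\<in>UNIV. F A $ j) = rtr A" .
qed



lemma forward:
  fixes Q :: "(real^'k) set" and f :: "complex^'n^'n \<Rightarrow> real^'k"
  assumes card: "CARD('k) = CARD('n)^2" and Qs: "Q \<subseteq> prob_simplex" and iso: "qss_isomorphism f Q"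
  shows "\<exists>P :: 'k \<Rightarrow> complex^'n^'n. is_SIC P \<and>
               (\<forall>\<rho>\<in>density_matrices. \<forall>j. f \<rho> $ j = Re (trace (\<rho> ** P j)) / real CARD('n))"
proof -
  obtain F :: "complex^'n^'n \<Rightarrow> real^'k" where
    lin: "\<forall>A\<in>herm_ops. \<forall>B\<in>herm_ops. \<forall>a b::real. F (a *\<^sub>R A + b *\<^sub>R B) = a *\<^sub>R F A + b *\<^sub>R F B"
    and bij: "bij_betw F herm_ops (UNIV :: (real^'k) set)"
    and agree: "\<forall>\<rho>\<in>density_matrices. F \<rho> = f \<rho>"
    and img: "F ` density_matrices = Q"
    and ip: "\<forall>\<rho>\<in>density_matrices. \<forall>\<rho>'\<in>density_matrices.
            inner (F \<rho>) (F \<rho>') = (Re (trace (\<rho> ** \<rho>')) + 1) / (real CARD('n) * (real CARD('n) + 1))"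
    using iso unfolding qss_isomorphism_def by blast
  define d where "d = real CARD('n)"
  have d0: "0 < d" by (simp add: d_def)
  have dd: "d + d * d \<noteq> 0" "d * d + d \<noteq> 0" "d + 1 \<noteq> 0" "1 + d \<noteq> 0"
    using d0 by (smt (verit) mult_pos_pos)+
  have simp_in: "F \<rho> \<in> prob_simplex" if "\<rho> \<in> density_matrices" for \<rho> using img Qs that by blast
  have sm: "\<forall>\<rho>\<in>density_matrices. (\<Sum>j\<in>UNIV. F \<rho> $ j) = 1" using simp_in by (simp add: prob_simplex_def)
  have nn: "0 \<le> F \<rho> $ j" if "\<rho> \<in> density_matrices" for \<rho> j using simp_in[OF that] by (simp add: prob_simplex_def)
  have IPH: "inner (F A) (F B) = (tr2 A B + rtr A * rtr B) / (d * (d + 1))" if "hermitian A" "hermitian B" for A B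
    using iso_ext(1)[OF lin ip sm that] by (simp add: d_def)
  have SUMH: "(\<Sum>j\<in>UNIV. F A $ j) = rtr A" if "hermitian A" for A
    using iso_ext(2)[OF lin ip sm that that] .
  have Fadd: "F (A + B) = F A + F B" if "hermitian A" "hermitian B" for A B
    using herm_lin_cases(1)[OF lin that] .
  have Fscale: "F (c *\<^sub>R A) = c *\<^sub>R F A" if "hermitian A" for A c
    using herm_lin_cases(2)[OF lin that] .
  have surj: "\<exists>B. hermitian B \<and> F B = v" for v
    using bij unfolding bij_betw_def herm_ops_def by (metis (mono_tags, lifting) UNIV_I imageE mem_Collect_eq)
  define Bm where "Bm j = (SOME B. hermitian B \<and> F B = axis j 1)" for j
  have Bm: "hermitian (Bm j) \<and> F (Bm j) = axis j 1" for j
    unfolding Bm_def by (rule someI_ex) (rule surj)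
  have hB: "hermitian (Bm j)" and FB: "F (Bm j) = axis j 1" for j using Bm by auto
  have rB: "rtr (Bm j) = 1" for j
    using SUMH[OF hB[of j]] by (simp add: FB axis_def sum.delta)
  define P where "P j = (1 / (d + 1)) *\<^sub>R (Bm j + rtr (Bm j) *\<^sub>R mat 1)" for j
  have P1: "P j = (1 / (d + 1)) *\<^sub>R (Bm j + mat 1)" for j by (simp add: P_def rB)
  have hP: "hermitian (P j)" for j unfolding P1 by (intro herm_scaleR herm_add hB herm_one)
  have R: "tr2 A (P j) = d * F A $ j" if hA: "hermitian A" for A j
  proof -
    have "tr2 A (P j) = (1 / (d + 1)) * (tr2 A (Bm j) + rtr A * rtr (Bm j))"
      by (simp add: P_def tr2_scale_right tr2_add_right tr2_one_right mult.commute)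
    also have "tr2 A (Bm j) + rtr A * rtr (Bm j) = (d * (d + 1)) * inner (F A) (F (Bm j))"
      using IPH[OF hA hB[of j]] d0 by simp
    also have "inner (F A) (F (Bm j)) = F A $ j" by (simp add: FB inner_axis)
    also have "(1 / (d + 1)) * ((d * (d + 1)) * F A $ j) = d * F A $ j" using d0 by (simp add: field_simps)
    finally show ?thesis .
  qed
  define t where "t = F (mat 1)"
  have FP: "F (P k) = (1 / (d + 1)) *\<^sub>R (axis k 1 + t)" for k
  proof -
    have "F (P k) = (1 / (d + 1)) *\<^sub>R F (Bm k + mat 1)"
      unfolding P1 by (rule Fscale[OF herm_add[OF hB herm_one]])
    also have "F (Bm k + mat 1) = F (Bm k) + F (mat 1)" by (rule Fadd[OF hB herm_one])
    finally show ?thesis by (simp add: FB t_def)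
  qed
  have TPP: "tr2 (P k) (P j) = d * ((if j = k then 1 else 0) + t $ j) / (d + 1)" for k j
    using R[OF hP[of k], of j] by (simp add: FP axis_def)
  have tconst: "t $ j = t $ k" for j k
  proof (cases "j = k")
    case False
    have "tr2 (P k) (P j) = tr2 (P j) (P k)" by (rule tr2_sym)
    hence "d * (0 + t $ j) / (d + 1) = d * (0 + t $ k) / (d + 1)" using False by (simp add: TPP)
    thus ?thesis using d0 by (simp add: field_simps)
  qed simp
  obtain j0 :: 'k where True by blast
  have "(\<Sum>j\<in>UNIV. t $ j) = d" unfolding t_def using SUMH[OF herm_one] by (simp add: rtr_one d_def)
  moreover have "(\<Sum>j\<in>UNIV. t $ j) = (\<Sum>j\<in>(UNIV::'k set). t $ j0)"
    by (rule sum.cong[OF refl tconst])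
  ultimately have "real CARD('k) * t $ j0 = d" by simp
  hence "d * d * t $ j0 = d" by (simp add: card d_def power2_eq_square)
  hence tval: "t $ j = 1 / d" for j using d0 tconst[of j j0] by (simp add: field_simps)
  have TPP': "tr2 (P k) (P l) = (d * (if k = l then 1 else 0) + 1) / (d + 1)" for k l
    using d0 dd by (simp add: TPP tval field_simps)
  have trPP: "trace (P k ** P l) = complex_of_real ((real CARD('n) * (if k = l then 1 else 0) + 1) / (real CARD('n) + 1))" for k l
    using trace_herm_eq[OF hP hP] TPP' by (simp add: d_def)
  have rP: "rtr (P j) = 1" for j
    using R[OF herm_one, of j] d0 by (simp add: tr2_one_left t_def[symmetric] tval)
  have PP: "tr2 (P j) (P j) = 1" for j using TPP'[of j j] d0 by simp
  have psdP: "psd (P j)" for j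
  proof -
    have "0 \<le> Re (qf (P j) x)" for x
    proof (cases "x = 0")
      case True thus ?thesis by (simp add: qf_def)
    next
      case False
      define N where "N = (\<Sum>k\<in>UNIV. (cmod (x $ k))\<^sup>2)"
      have N0: "0 \<le> N" by (simp add: N_def sum_nonneg)
      define \<rho> where "\<rho> = (1 / N) *\<^sub>R outer x"
      have s: "\<rho> \<in> density_matrices" using outer_state[OF False] by (simp add: \<rho>_def N_def)
      have Nn: "N \<noteq> 0" using False by (simp add: N_def sum_nonneg_eq_0_iff vec_eq_iff)
      have "outer x = N *\<^sub>R \<rho>" using Nn by (simp add: \<rho>_def)
      hence "Re (qf (P j) x) = N * tr2 \<rho> (P j)"
        by (simp add: trace_outer_left[symmetric] tr2_def[symmetric] tr2_scale_left)
      also have "\<dots> = N * (d * F \<rho> $ j)" using R[OF dens_herm[OF s]] by simp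
      finally show ?thesis using N0 d0 nn[OF s, of j] by simp
    qed
    thus ?thesis using hP by (simp add: psd_iff)
  qed
  have r1: "rank_one_projector (P j)" for j
    using psd_pure[OF psdP rP PP] rank_one_outer by metis
  have injP: "inj P"
  proof (rule injI)
    fix k l assume e: "P k = P l"
    show "k = l"
    proof (rule ccontr)
      assume "k \<noteq> l"
      hence "tr2 (P k) (P l) = 1 / (d + 1)" using TPP' by simp
      moreover have "tr2 (P k) (P l) = 1" using e PP by simp
      ultimately show False using d0 by (simp add: field_simps)
    qed
  qed
  have "is_SIC P" unfolding is_SIC_def using card injP r1 trPP by blast
  moreover have "\<forall>\<rho>\<in>density_matrices. \<forall>j. f \<rho> $ j = Re (trace (\<rho> ** P j)) / real CARD('n)"
  proof (intro ballI allI)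
    fix \<rho> :: "complex^'n^'n" and j assume s: "\<rho> \<in> density_matrices"
    have "Re (trace (\<rho> ** P j)) = d * F \<rho> $ j" using R[OF dens_herm[OF s]] by (simp add: tr2_def)
    thus "f \<rho> $ j = Re (trace (\<rho> ** P j)) / real CARD('n)" using agree s d0 by (simp add: d_def)
  qed
  ultimately show ?thesis by blast
qed



definition FS :: "('k \<Rightarrow> complex^'n^'n) \<Rightarrow> complex^'n^'n \<Rightarrow> real^'k" where
  "FS P A = (\<chi> j. tr2 A (P j) / real CARD('n))"

lemma FS_add: "FS P (A + B) = FS P A + FS P B"
  by (simp add: FS_def vec_eq_iff tr2_add_left add_divide_distrib)
lemma FS_scale: "FS P (c *\<^sub>R A) = c *\<^sub>R FS P A"
  by (simp add: FS_def vec_eq_iff tr2_scale_left)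
lemma FS_diff: "FS P (A - B) = FS P A - FS P B"
  by (simp add: FS_def vec_eq_iff tr2_diff_left diff_divide_distrib)
lemma linear_FS: "linear (FS P)"
  by (rule linearI) (simp_all add: FS_add FS_scale)
lemma FS_comp: "FS P (A::complex^'n^'n) $ j = tr2 A (P j) / real CARD('n)"
  by (simp add: FS_def)

definition dlt :: "'a \<Rightarrow> 'a \<Rightarrow> real" where "dlt k j = (if k = j then 1 else 0)"

lemma sum_dlt: "(\<Sum>j\<in>(UNIV::'a::finite set). dlt k j) = 1"
  by (simp add: dlt_def)
lemma sum_dlt2: "(\<Sum>j\<in>(UNIV::'a::finite set). dlt k j * dlt l j) = dlt k l"
proof -
  have "dlt k j * dlt l j = (if k = j then dlt k l else 0)" for j by (simp add: dlt_def)
  thus ?thesis by simp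
qed

lemma sum_swap_mult:
  fixes c :: "'a \<Rightarrow> 'c::comm_semiring_1"
  shows "(\<Sum>i\<in>A. c i * (\<Sum>k\<in>B. d i k * e k)) = (\<Sum>k\<in>B. (\<Sum>i\<in>A. c i * d i k) * e k)"
proof -
  have "(\<Sum>i\<in>A. c i * (\<Sum>k\<in>B. d i k * e k)) = (\<Sum>i\<in>A. \<Sum>k\<in>B. c i * d i k * e k)"
    by (simp add: sum_distrib_left mult.assoc)
  also have "\<dots> = (\<Sum>k\<in>B. \<Sum>i\<in>A. c i * d i k * e k)" by (rule sum.swap)
  also have "\<dots> = (\<Sum>k\<in>B. (\<Sum>i\<in>A. c i * d i k) * e k)" by (simp add: sum_distrib_right)
  finally show ?thesis .
qed

lemma qf_alt: "qf A x = (\<Sum>i\<in>UNIV. cnj (x $ i) * (\<Sum>j\<in>UNIV. A $ i $ j * x $ j))"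
  by (simp add: qf_def sum_distrib_left mult.assoc)

lemma psd_idem: assumes h: "hermitian P" and idem: "P ** P = P" shows "psd P"
proof -
  have "0 \<le> Re (qf P x)" for x
  proof -
    define y where "y k = (\<Sum>j\<in>UNIV. P $ k $ j * x $ j)" for k
    have inner: "(\<Sum>j\<in>UNIV. (P ** P) $ i $ j * x $ j) = (\<Sum>k\<in>UNIV. P $ i $ k * y k)" for i
    proof -
      have "(\<Sum>j\<in>UNIV. (P ** P) $ i $ j * x $ j) = (\<Sum>j\<in>UNIV. x $ j * (\<Sum>k\<in>UNIV. P $ k $ j * P $ i $ k))"
        by (simp add: matrix_matrix_mult_def mult.commute)
      also have "\<dots> = (\<Sum>k\<in>UNIV. (\<Sum>j\<in>UNIV. x $ j * P $ k $ j) * P $ i $ k)" by (rule sum_swap_mult)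
      also have "\<dots> = (\<Sum>k\<in>UNIV. P $ i $ k * y k)" by (simp add: y_def mult.commute)
      finally show ?thesis .
    qed
    have "qf (P ** P) x = (\<Sum>i\<in>UNIV. cnj (x $ i) * (\<Sum>k\<in>UNIV. P $ i $ k * y k))"
      by (simp add: qf_alt inner)
    also have "\<dots> = (\<Sum>k\<in>UNIV. (\<Sum>i\<in>UNIV. cnj (x $ i) * P $ i $ k) * y k)" by (rule sum_swap_mult)
    also have "(\<lambda>k. \<Sum>i\<in>UNIV. cnj (x $ i) * P $ i $ k) = (\<lambda>k. cnj (y k))"
      by (rule ext) (simp add: y_def herm_cnj[OF h] mult.commute)
    finally have "qf P x = (\<Sum>k\<in>UNIV. complex_of_real ((cmod (y k))\<^sup>2))"
      using idem by (simp add: cnj_mult_self)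
    thus ?thesis by (simp add: sum_nonneg)
  qed
  thus ?thesis using h by (simp add: psd_iff)
qed

lemma SIC_basic:
  assumes "is_SIC (P :: 'k::finite \<Rightarrow> complex^'n^'n)"
  shows "hermitian (P j)" "psd (P j)"
    "tr2 (P k) (P l) = (real CARD('n) * dlt k l + 1) / (real CARD('n) + 1)"
    "rtr (P j) = 1" "inj P" "CARD('k) = CARD('n)^2"
proof -
  have r: "rank_one_projector (P i)" for i using assms by (simp add: is_SIC_def)
  show h: "hermitian (P j)" using r by (simp add: rank_one_projector_def)
  show "psd (P j)" using r by (intro psd_idem) (simp_all add: rank_one_projector_def)
  show tPP: "tr2 (P k) (P l) = (real CARD('n) * dlt k l + 1) / (real CARD('n) + 1)" for k l
    using assms unfolding is_SIC_def tr2_def dlt_def by simp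
  have "P j ** P j = P j" using r by (simp add: rank_one_projector_def)
  hence "rtr (P j) = tr2 (P j) (P j)" by (simp add: rtr_def tr2_def)
  also have "\<dots> = 1" by (simp add: tPP dlt_def)
  finally show "rtr (P j) = 1" .
  show "inj P" "CARD('k) = CARD('n)^2" using assms by (simp_all add: is_SIC_def)
qed



lemma tr2_zero_right: "tr2 A 0 = 0"
  by (simp add: tr2_sum)

lemma SIC_span:
  assumes S: "is_SIC (P :: 'k::finite \<Rightarrow> complex^'n^'n)"
  shows "herm_ops \<subseteq> span (range P)"
proof -
  note B = SIC_basic[OF S]
  define d where "d = real CARD('n)"
  have d0: "0 < d" by (simp add: d_def)
  have sub: "range P \<subseteq> herm_ops" using B(1) by (auto simp: herm_ops_iff)
  have ind: "independent (range P)"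
  proof
    assume "dependent (range P)"
    then obtain u where u: "\<exists>v\<in>range P. u v \<noteq> 0" and z: "(\<Sum>v\<in>range P. u v *\<^sub>R v) = 0"
      using dependent_finite[of "range P"] by auto
    define c where "c k = u (P k)" for k
    have z': "(\<Sum>k\<in>UNIV. c k *\<^sub>R P k) = 0"
      using z by (simp add: sum.reindex[OF inj_on_subset[OF B(5) subset_UNIV]] c_def o_def)
    have tr2sum: "tr2 (P j) (\<Sum>k\<in>UNIV. c k *\<^sub>R P k) = (\<Sum>k\<in>UNIV. c k * tr2 (P j) (P k))" for j
    proof -
      have "tr2 (P j) (\<Sum>k\<in>K. c k *\<^sub>R P k) = (\<Sum>k\<in>K. c k * tr2 (P j) (P k))" if "finite K" for K
        using that by (induction K rule: finite_induct) (simp_all add: tr2_add_right tr2_scale_right tr2_zero_right)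
      thus ?thesis by simp
    qed
    have eq: "d * c j + (\<Sum>k\<in>UNIV. c k) = 0" for j
    proof -
      have "0 = (\<Sum>k\<in>UNIV. c k * tr2 (P j) (P k))" using tr2sum[of j] z' by (simp add: tr2_zero_right)
      also have "\<dots> = (\<Sum>k\<in>UNIV. c k * (d * dlt j k + 1)) / (d + 1)"
        by (simp add: B(3) d_def sum_divide_distrib)
      also have "(\<Sum>k\<in>UNIV. c k * (d * dlt j k + 1)) = d * c j + (\<Sum>k\<in>UNIV. c k)"
      proof -
        have "(\<Sum>k\<in>UNIV. c k * (d * dlt j k + 1)) = (\<Sum>k\<in>UNIV. d * (c k * dlt j k)) + (\<Sum>k\<in>UNIV. c k)"
          by (simp add: algebra_simps sum.distrib)
        also have "(\<Sum>k\<in>UNIV. d * (c k * dlt j k)) = d * c j"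
        proof -
          have "c k * dlt j k = (if j = k then c j else 0)" for k by (simp add: dlt_def)
          thus ?thesis by (simp add: sum_distrib_left[symmetric])
        qed
        finally show ?thesis .
      qed
      finally show ?thesis using d0 by (simp add: field_simps)
    qed
    define s where "s = (\<Sum>k\<in>UNIV. c k)"
    have cj: "c j = - s / d" for j using eq[of j] d0 by (simp add: s_def field_simps)
    have cfun: "c = (\<lambda>_. - s / d)" by (rule ext) (rule cj)
    have e: "sum c UNIV = (\<Sum>k\<in>(UNIV::'k set). - s / d)" by (simp add: cfun)
    have "s = (\<Sum>k\<in>(UNIV::'k set). - s / d)" using e by (simp only: s_def[symmetric])
    also have "\<dots> = - real CARD('k) * s / d" by simp
    also have "\<dots> = - d * s" using d0 by (simp add: B(6) d_def power2_eq_square)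
    finally have "s * (1 + d) = 0" by (simp add: algebra_simps)
    hence "s = 0" using d0 by simp
    hence "c j = 0" for j using cj by simp
    thus False using u by (auto simp: c_def)
  qed
  have "card (range P) = CARD('n)^2" using B(5) B(6) by (simp add: card_image)
  hence "dim (herm_ops :: (complex^'n^'n) set) \<le> card (range P)" by (simp add: dim_herm)
  thus ?thesis by (rule card_ge_dim_independent[OF sub ind])
qed



lemma SIC_IP:
  assumes S: "is_SIC (P :: 'k::finite \<Rightarrow> complex^'n^'n)"
    and A: "A \<in> span (range P)" and B: "B \<in> span (range P)"
  shows "inner (FS P A) (FS P B) = (tr2 A B + rtr A * rtr B) / (real CARD('n) * (real CARD('n) + 1))"
proof -
  note Bs = SIC_basic[OF S]
  define d where "d = real CARD('n)"
  have d0: "0 < d" by (simp add: d_def)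
  define G where "G A B = inner (FS P A) (FS P B) - (tr2 A B + rtr A * rtr B) / (d * (d + 1))" for A B
  have linL: "linear (\<lambda>A. G A B)" for B
    by (rule linearI) (simp_all add: G_def FS_add FS_scale inner_add_left tr2_add_left rtr_add
        tr2_scale_left rtr_scale algebra_simps add_divide_distrib diff_divide_distrib)
  have linR: "linear (\<lambda>B. G A B)" for A
    by (rule linearI) (simp_all add: G_def FS_add FS_scale inner_add_right tr2_add_right rtr_add
        tr2_scale_right rtr_scale algebra_simps add_divide_distrib diff_divide_distrib)
  have base: "G (P k) (P l) = 0" for k l
  proof -
    have comp: "FS P (P k) $ j = (d * dlt k j + 1) / (d * (d + 1))" for k j
      using d0 by (simp add: FS_comp Bs(3) d_def)
    have "inner (FS P (P k)) (FS P (P l)) = (\<Sum>j\<in>UNIV. (d * dlt k j + 1) * (d * dlt l j + 1)) / (d * (d + 1))\<^sup>2"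
      by (simp add: inner_vec_def comp sum_divide_distrib power2_eq_square)
    also have "(\<Sum>j\<in>UNIV. (d * dlt k j + 1) * (d * dlt l j + 1))
        = d * d * (\<Sum>j\<in>UNIV. dlt k j * dlt l j) + d * (\<Sum>j\<in>UNIV. dlt k j) + d * (\<Sum>j\<in>UNIV. dlt l j)
          + real CARD('k)"
      by (simp add: algebra_simps sum.distrib sum_distrib_left)
    also have "\<dots> = d * d * dlt k l + 2 * d + d * d"
      by (simp add: sum_dlt sum_dlt2 Bs(6) d_def power2_eq_square)
    finally have L: "inner (FS P (P k)) (FS P (P l)) = (d * d * dlt k l + 2 * d + d * d) / (d * (d + 1))\<^sup>2" .
    have R: "tr2 (P k) (P l) + rtr (P k) * rtr (P l) = (d * dlt k l + 1) / (d + 1) + 1"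
      by (simp add: Bs(3) Bs(4) d_def)
    have nz: "d \<noteq> 0" "d + 1 \<noteq> 0" using d0 by simp_all
    have "(d * d * dlt k l + 2 * d + d * d) / (d * (d + 1))\<^sup>2 = ((d * dlt k l + 1) / (d + 1) + 1) / (d * (d + 1))"
      using nz by (simp add: divide_simps) (simp add: algebra_simps power2_eq_square)
    thus ?thesis unfolding G_def L R by simp
  qed
  have s1: "G A' (P l) = 0" if "A' \<in> span (range P)" for A' l
    by (rule span_induct[OF that linear_subspace_kernel[OF linL]]) (auto simp: base)
  have "G A B' = 0" if "B' \<in> span (range P)" for B'
    by (rule span_induct[OF that linear_subspace_kernel[OF linR]]) (auto simp: s1[OF A])
  from this[OF B] show ?thesis by (simp add: G_def d_def)
qed

lemma SIC_sum:
  assumes S: "is_SIC (P :: 'k::finite \<Rightarrow> complex^'n^'n)" and A: "A \<in> span (range P)"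
  shows "(\<Sum>j\<in>UNIV. FS P A $ j) = rtr A"
proof -
  note Bs = SIC_basic[OF S]
  define d where "d = real CARD('n)"
  have d0: "0 < d" by (simp add: d_def)
  define L where "L A = (\<Sum>j\<in>UNIV. FS P A $ j) - rtr A" for A
  have lin: "linear L"
    by (rule linearI) (simp_all add: L_def FS_add FS_scale rtr_add rtr_scale sum.distrib sum_distrib_left algebra_simps)
  have base: "L (P k) = 0" for k
  proof -
    have "(\<Sum>j\<in>UNIV. FS P (P k) $ j) = (\<Sum>j\<in>UNIV. (d * dlt k j + 1)) / ((d + 1) * d)"
      using d0 by (simp add: FS_comp Bs(3) d_def sum_divide_distrib)
    also have sd: "(\<Sum>j\<in>UNIV. (d * dlt k j + 1)) = d + d * d"
      by (simp add: sum.distrib sum_distrib_left[symmetric] sum_dlt Bs(6) d_def power2_eq_square)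
    moreover have "(d + d * d) / ((d + 1) * d) = 1" using d0 by (simp add: divide_simps) (simp add: algebra_simps)
    ultimately show ?thesis by (simp add: L_def Bs(4))
  qed
  have "L A = 0" by (rule span_induct[OF A linear_subspace_kernel[OF lin]]) (auto simp: base)
  thus ?thesis by (simp add: L_def)
qed



lemma SIC_IPH:
  assumes S: "is_SIC (P :: 'k::finite \<Rightarrow> complex^'n^'n)" and "hermitian A" "hermitian B"
  shows "inner (FS P A) (FS P B) = (tr2 A B + rtr A * rtr B) / (real CARD('n) * (real CARD('n) + 1))"
proof -
  have a: "A \<in> span (range P)" using SIC_span[OF S] assms(2) herm_ops_iff by blast
  have b: "B \<in> span (range P)" using SIC_span[OF S] assms(3) herm_ops_iff by blast
  show ?thesis by (rule SIC_IP[OF S a b])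
qed

lemma SIC_SUMH:
  assumes S: "is_SIC (P :: 'k::finite \<Rightarrow> complex^'n^'n)" and "hermitian A"
  shows "(\<Sum>j\<in>UNIV. FS P A $ j) = rtr A"
proof -
  have a: "A \<in> span (range P)" using SIC_span[OF S] assms(2) herm_ops_iff by blast
  show ?thesis by (rule SIC_sum[OF S a])
qed

lemma SIC_bij:
  assumes S: "is_SIC (P :: 'k::finite \<Rightarrow> complex^'n^'n)"
  shows "bij_betw (FS P) herm_ops UNIV"
proof -
  have inj: "inj_on (FS P) herm_ops"
  proof (rule inj_onI)
    fix A B assume A: "A \<in> herm_ops" and B: "B \<in> herm_ops" and e: "FS P A = FS P B"
    define C where "C = A - B"
    have hC: "hermitian C" using A B by (simp add: C_def herm_ops_iff herm_diff)
    have "FS P C = 0" using e by (simp add: C_def FS_diff)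
    hence "0 = (tr2 C C + rtr C * rtr C) / (real CARD('n) * (real CARD('n) + 1))"
      using SIC_IPH[OF S hC hC] by simp
    hence z: "tr2 C C + rtr C * rtr C = 0" by simp
    have t0: "0 \<le> tr2 C C" by (simp add: tr2_self_herm[OF hC] sum_nonneg)
    have "0 \<le> rtr C * rtr C" by simp
    hence "tr2 C C = 0" using z t0 by linarith
    hence "(\<Sum>i\<in>UNIV. \<Sum>k\<in>UNIV. (cmod (C $ i $ k))\<^sup>2) = 0" by (simp add: tr2_self_herm[OF hC])
    hence "\<forall>i\<in>UNIV. (\<Sum>k\<in>UNIV. (cmod (C $ i $ k))\<^sup>2) = 0"
      by (subst sum_nonneg_eq_0_iff[symmetric]) (simp_all add: sum_nonneg)
    hence "C $ i $ k = 0" for i k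
      using sum_nonneg_eq_0_iff[of UNIV "\<lambda>k. (cmod (C $ i $ k))\<^sup>2", OF finite] by auto
    hence "C = 0" by (simp add: vec_eq_iff)
    thus "A = B" by (simp add: C_def)
  qed
  have sH: "subspace herm_ops" by (rule subspace_herm)
  have spH: "span herm_ops = herm_ops" using sH by (simp add: span_eq_iff)
  have sI: "subspace (FS P ` herm_ops)" by (rule linear_subspace_image[OF linear_FS sH])
  have "dim (FS P ` herm_ops) = dim (herm_ops :: (complex^'n^'n) set)"
    by (rule dim_image_eq[OF linear_FS]) (simp add: spH inj)
  also have "\<dots> = DIM(real^'k)" using SIC_basic(6)[OF S] by (simp add: dim_herm)
  finally have "span (FS P ` herm_ops) = UNIV" by (rule dim_eq_full[THEN iffD1])
  hence "FS P ` herm_ops = UNIV" using sI span_eq_iff by metis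
  thus ?thesis using inj by (simp add: bij_betw_def)
qed

lemma SIC_polar:
  assumes S: "is_SIC (P :: 'k::finite \<Rightarrow> complex^'n^'n)"
  shows "polar CARD('n) (FS P ` density_matrices) \<subseteq> FS P ` density_matrices"
proof
  fix u assume u: "u \<in> polar CARD('n) (FS P ` density_matrices)"
  define c where "c = real CARD('n) * (real CARD('n) + 1)"
  have c0: "0 < c" by (simp add: c_def)
  have uH: "(\<Sum>i\<in>UNIV. u $ i) = 1" using u by (simp add: polar_def hyperplane_H_def)
  have uP: "1 / c \<le> inner u (FS P \<rho>)" if "\<rho> \<in> density_matrices" for \<rho>
    using u that by (auto simp: polar_def c_def)
  obtain A where A: "A \<in> herm_ops" and FA: "FS P A = u"
    using SIC_bij[OF S] unfolding bij_betw_def by (metis UNIV_I imageE)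
  have hA: "hermitian A" using A by (simp add: herm_ops_iff)
  have rA: "rtr A = 1" using SIC_SUMH[OF S hA] uH FA by simp
  have nn: "0 \<le> tr2 A \<rho>" if s: "\<rho> \<in> density_matrices" for \<rho>
  proof -
    have "inner u (FS P \<rho>) = (tr2 A \<rho> + 1) / c"
      using SIC_IPH[OF S hA dens_herm[OF s]] FA rA s by (simp add: c_def dens_iff)
    hence "1 / c \<le> (tr2 A \<rho> + 1) / c" using uP[OF s] by simp
    thus ?thesis using c0 by (simp add: divide_le_cancel)
  qed
  have "0 \<le> Re (qf A x)" for x
  proof (cases "x = 0")
    case True thus ?thesis by (simp add: qf_def)
  next
    case False
    define N where "N = (\<Sum>k\<in>UNIV. (cmod (x $ k))\<^sup>2)"
    have N0: "0 \<le> N" by (simp add: N_def sum_nonneg)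
    define \<rho> where "\<rho> = (1 / N) *\<^sub>R outer x"
    have s: "\<rho> \<in> density_matrices" using outer_state[OF False] by (simp add: \<rho>_def N_def)
    have Nn: "N \<noteq> 0" using False by (simp add: N_def sum_nonneg_eq_0_iff vec_eq_iff)
    have "outer x = N *\<^sub>R \<rho>" using Nn by (simp add: \<rho>_def)
    hence "Re (qf A x) = N * tr2 \<rho> A"
      by (simp add: trace_outer_left[symmetric] tr2_def[symmetric] tr2_scale_left)
    also have "\<dots> = N * tr2 A \<rho>" by (simp add: tr2_sym)
    finally show ?thesis using N0 nn[OF s] by simp
  qed
  hence "A \<in> density_matrices" using hA rA by (simp add: dens_iff psd_iff)
  thus "u \<in> FS P ` density_matrices" using FA by blast
qed



lemma polar_anti: "A \<subseteq> B \<Longrightarrow> polar d B \<subseteq> polar d A"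
  by (auto simp: polar_def)

lemma reverse:
  fixes Q :: "(real^'k) set" and f :: "complex^'n^'n \<Rightarrow> real^'k" and P :: "'k \<Rightarrow> complex^'n^'n"
  assumes Qp: "polar CARD('n) Q = Q" and fQ: "f ` density_matrices \<subseteq> Q" and S: "is_SIC P"
    and fr: "\<forall>\<rho>\<in>density_matrices. \<forall>j. f \<rho> $ j = Re (trace (\<rho> ** P j)) / real CARD('n)"
  shows "qss_isomorphism f Q"
proof -
  have agree: "\<forall>\<rho>\<in>density_matrices. FS P \<rho> = f \<rho>"
    using fr by (simp add: vec_eq_iff FS_comp tr2_def)
  have lin: "\<forall>A\<in>herm_ops. \<forall>B\<in>herm_ops. \<forall>a b::real. FS P (a *\<^sub>R A + b *\<^sub>R B) = a *\<^sub>R FS P A + b *\<^sub>R FS P B"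
    by (simp add: FS_add FS_scale)
  have sub: "FS P ` density_matrices \<subseteq> Q" using agree fQ by auto
  have "Q \<subseteq> FS P ` density_matrices"
  proof -
    have "Q = polar CARD('n) Q" using Qp by simp
    also have "\<dots> \<subseteq> polar CARD('n) (FS P ` density_matrices)" by (rule polar_anti[OF sub])
    also have "\<dots> \<subseteq> FS P ` density_matrices" by (rule SIC_polar[OF S])
    finally show ?thesis .
  qed
  hence img: "FS P ` density_matrices = Q" using sub by blast
  have ip: "\<forall>\<rho>\<in>density_matrices. \<forall>\<rho>'\<in>density_matrices.
            inner (FS P \<rho>) (FS P \<rho>') = (Re (trace (\<rho> ** \<rho>')) + 1) / (real CARD('n) * (real CARD('n) + 1))"
    using SIC_IPH[OF S dens_herm dens_herm] by (simp add: dens_iff tr2_def)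
  show ?thesis unfolding qss_isomorphism_def
    using lin SIC_bij[OF S] agree img ip by blast
qed

lemma SIC_qplex:
  fixes P :: "'k::finite \<Rightarrow> complex^'n^'n"
  assumes S: "is_SIC P"
  shows "qplex CARD('n) (FS P ` density_matrices)"
proof -
  define d where "d = real CARD('n)"
  have d0: "0 < d" by (simp add: d_def)
  have card: "CARD('k) = CARD('n)^2" using SIC_basic(6)[OF S] .
  have sum1: "(\<Sum>j\<in>UNIV. FS P \<rho> $ j) = 1" if "\<rho> \<in> density_matrices" for \<rho>
    using SIC_SUMH[OF S dens_herm[OF that]] that by (simp add: dens_iff)
  have simp_: "FS P ` density_matrices \<subseteq> prob_simplex"
  proof
    fix u assume "u \<in> FS P ` density_matrices"
    then obtain \<rho> where s: "\<rho> \<in> density_matrices" and u: "u = FS P \<rho>" by blast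
    have "0 \<le> u $ j" for j
      using psd_tr2_nonneg[of \<rho> "P j"] s SIC_basic(2)[OF S] by (simp add: u FS_comp dens_iff)
    thus "u \<in> prob_simplex" using sum1[OF s] by (simp add: prob_simplex_def u)
  qed
  have ball: "FS P ` density_matrices \<subseteq> out_ball CARD('n)"
  proof
    fix u assume "u \<in> FS P ` density_matrices"
    then obtain \<rho> where s: "\<rho> \<in> density_matrices" and u: "u = FS P \<rho>" by blast
    have hr: "hermitian \<rho>" using s by (rule dens_herm)
    have r1: "rtr \<rho> = 1" using s by (simp add: dens_iff)
    have uH: "(\<Sum>i\<in>UNIV. u $ i) = 1" using sum1[OF s] u by simp
    have cc: "centre $ i = 1 / (d * d)" for i :: 'k by (simp add: centre_def card d_def power2_eq_square)
    have uu: "inner u u = (tr2 \<rho> \<rho> + 1) / (d * (d + 1))"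
      using SIC_IPH[OF S hr hr] r1 by (simp add: u d_def)
    have tt: "tr2 \<rho> \<rho> \<le> 1" using psd_tr_sq[of \<rho>] s by (simp add: dens_iff)
    have uc: "inner u centre = 1 / (d * d)"
      using uH by (simp add: inner_vec_def cc sum_divide_distrib[symmetric])
    have ccc: "inner centre (centre :: real^'k) = 1 / (d * d)"
      using d0 by (simp add: inner_vec_def cc card d_def power2_eq_square)
    have "(norm (u - centre))\<^sup>2 = inner u u - 2 * inner u centre + inner centre (centre :: real^'k)"
      by (simp add: power2_norm_eq_inner inner_diff_left inner_diff_right inner_commute)
    also have "\<dots> = (tr2 \<rho> \<rho> + 1) / (d * (d + 1)) - 1 / (d * d)"
      by (simp add: uu uc ccc)
    also have "\<dots> \<le> 2 / (d * (d + 1)) - 1 / (d * d)"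
      using tt d0 by (simp add: divide_right_mono)
    also have "\<dots> = (d - 1) / (d\<^sup>2 * (d + 1))"
      using d0 by (simp add: divide_simps) (simp add: algebra_simps power2_eq_square)
    finally have "(norm (u - centre))\<^sup>2 \<le> (d - 1) / (d\<^sup>2 * (d + 1))" .
    thus "u \<in> out_ball CARD('n)" using uH by (simp add: out_ball_def hyperplane_H_def d_def)
  qed
  have pol: "polar CARD('n) (FS P ` density_matrices) = FS P ` density_matrices"
  proof
    show "polar CARD('n) (FS P ` density_matrices) \<subseteq> FS P ` density_matrices" by (rule SIC_polar[OF S])
  next
    show "FS P ` density_matrices \<subseteq> polar CARD('n) (FS P ` density_matrices)"
    proof
      fix u assume "u \<in> FS P ` density_matrices"
      then obtain \<sigma> where s: "\<sigma> \<in> density_matrices" and u: "u = FS P \<sigma>" by blast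
      have "1 / (d * (d + 1)) \<le> inner u v" if vin: "v \<in> FS P ` density_matrices" for v
      proof -
        obtain \<rho> where r: "\<rho> \<in> density_matrices" and v: "v = FS P \<rho>" using vin by blast
        have "inner u v = (tr2 \<sigma> \<rho> + 1) / (d * (d + 1))"
          using SIC_IPH[OF S dens_herm[OF s] dens_herm[OF r]] s r by (simp add: u v d_def dens_iff)
        moreover have "0 \<le> tr2 \<sigma> \<rho>" using s r by (intro psd_tr2_nonneg) (simp_all add: dens_iff)
        ultimately show ?thesis using d0 by (simp add: divide_right_mono)
      qed
      moreover have "u \<in> hyperplane_H" using sum1[OF s] by (simp add: hyperplane_H_def u)
      ultimately show "u \<in> polar CARD('n) (FS P ` density_matrices)"
        by (auto simp: polar_def d_def)
    qed
  qed
  show ?thesis unfolding qplex_def using simp_ ball pol by blast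
qed


theorem mainTheorem17:
  fixes Q :: "(real^'k) set" and f :: "complex^'n^'n \<Rightarrow> real^'k"
  assumes "CARD('n) \<ge> 2"
    and "CARD('k) = CARD('n)^2"
    and "qplex CARD('n) Q"
    and "f ` density_matrices \<subseteq> Q"
  shows "(qss_isomorphism f Q \<longleftrightarrow>
            (\<exists>P :: 'k \<Rightarrow> complex^'n^'n. is_SIC P \<and>
               (\<forall>\<rho>\<in>density_matrices. \<forall>j.
                   f \<rho> $ j = Re (trace (\<rho> ** P j)) / real CARD('n))))
         \<and> ((\<exists>P :: 'k \<Rightarrow> complex^'n^'n. is_SIC P) \<longleftrightarrow>
            (\<exists>Q' :: (real^'k) set. hilbert_qplex TYPE('n) Q'))"
proof -
  have Qs: "Q \<subseteq> prob_simplex" and Qp: "polar CARD('n) Q = Q"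
    using assms(3) by (auto simp: qplex_def)
  have part1: "qss_isomorphism f Q \<longleftrightarrow>
            (\<exists>P :: 'k \<Rightarrow> complex^'n^'n. is_SIC P \<and>
               (\<forall>\<rho>\<in>density_matrices. \<forall>j.
                   f \<rho> $ j = Re (trace (\<rho> ** P j)) / real CARD('n)))"
  proof
    assume "qss_isomorphism f Q"
    thus "\<exists>P :: 'k \<Rightarrow> complex^'n^'n. is_SIC P \<and>
               (\<forall>\<rho>\<in>density_matrices. \<forall>j. f \<rho> $ j = Re (trace (\<rho> ** P j)) / real CARD('n))"
      by (rule forward[OF assms(2) Qs])
  next
    assume "\<exists>P :: 'k \<Rightarrow> complex^'n^'n. is_SIC P \<and>
               (\<forall>\<rho>\<in>density_matrices. \<forall>j. f \<rho> $ j = Re (trace (\<rho> ** P j)) / real CARD('n))"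
    then obtain P :: "'k \<Rightarrow> complex^'n^'n" where S: "is_SIC P"
      and fr: "\<forall>\<rho>\<in>density_matrices. \<forall>j. f \<rho> $ j = Re (trace (\<rho> ** P j)) / real CARD('n)" by blast
    show "qss_isomorphism f Q" by (rule reverse[OF Qp assms(4) S fr])
  qed
  have part2: "(\<exists>P :: 'k \<Rightarrow> complex^'n^'n. is_SIC P) \<longleftrightarrow>
            (\<exists>Q' :: (real^'k) set. hilbert_qplex TYPE('n) Q')"
  proof
    assume "\<exists>P :: 'k \<Rightarrow> complex^'n^'n. is_SIC P"
    then obtain P :: "'k \<Rightarrow> complex^'n^'n" where S: "is_SIC P" by blast
    have qp: "qplex CARD('n) (FS P ` density_matrices)" by (rule SIC_qplex[OF S])
    have fr: "\<forall>\<rho>\<in>density_matrices. \<forall>j. FS P \<rho> $ j = Re (trace (\<rho> ** P j)) / real CARD('n)"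
      by (simp add: FS_comp tr2_def)
    have "polar CARD('n) (FS P ` density_matrices) = FS P ` density_matrices"
      using qp by (simp add: qplex_def)
    hence "qss_isomorphism (FS P) (FS P ` density_matrices)"
      by (rule reverse[OF _ subset_refl S fr])
    hence "hilbert_qplex TYPE('n) (FS P ` density_matrices)"
      using qp unfolding hilbert_qplex_def by blast
    thus "\<exists>Q' :: (real^'k) set. hilbert_qplex TYPE('n) Q'" by blast
  next
    assume "\<exists>Q' :: (real^'k) set. hilbert_qplex TYPE('n) Q'"
    then obtain Q' :: "(real^'k) set" and g :: "complex^'n^'n \<Rightarrow> real^'k"
      where qp: "qplex CARD('n) Q'" and iso: "qss_isomorphism g Q'"
      unfolding hilbert_qplex_def by blast
    have "Q' \<subseteq> prob_simplex" using qp by (simp add: qplex_def)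
    from forward[OF assms(2) this iso]
    show "\<exists>P :: 'k \<Rightarrow> complex^'n^'n. is_SIC P" by blast
  qed
  show ?thesis using part1 part2 by blast
qed

end
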